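(* Let $X$ be a real Banach space, let $A\subset X\times X^*$ be self-cancelling and suppose that $A^\vdash$ is maximal monotone. Then for any $(x_0,x_0^* )\in X\times X^*$ the operator $T=A^\vdash+\{(x_0,x_0^* )\}=\{(y+x_0,y^*+x_0^* )\mid (y,y^* )\in A^\vdash\}$ is non-enlargeable; equivalently, $\{(x,x^* )\mid \varphi_T(x,x^* )<\infty\}=T$.
   Context: $\langle x,x^*\rangle=x^*(x)$. Operators $X\rightrightarrows X^*$ are subsets of $X\times X^*$; monotone means $\langle x-y,x^*-y^*\rangle\ge0$ on pairs in the operator, maximal monotone means monotone and maximal under inclusion among monotone operators. $A$ is self-cancelling if it is a linear subspace of $X\times X^*$ with $\langle x,x^*\rangle=0$ for all $(x,x^* )\in A$. $B^\vdash=\{(y,y^* )\mid \langle x,y^*\rangle+\langle y,x^*\rangle=0\ \forall (x,x^* )\in B\}$. For maximal monotone $T$ and $\varepsilon\ge0$, $T^\varepsilon=\{(x,x^* )\mid \langle x-y,x^*-y^*\rangle\ge-\varepsilon\ \forall (y,y^* )\in T\}$, and $T$ is non-enlargeable if $T^\varepsilon=T$ for all $\varepsilon\ge0$. The Fitzpatrick function is $\varphi_T(x,x^* )=\sup_{(y,y^* )\in T}\big(\langle x,y^*\rangle+\langle y,x^*\rangle-\langle y,y^*\rangle\big)$. *)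

theory Defs
  imports "HOL-Analysis.Analysis" "HOL-Library.Extended_Real"
begin

text \<open>The dual space X* of a real Banach space X is modelled as the space of bounded
  linear functionals (blinfun to real); the pairing is evaluation.\<close>

definition pairing :: "'a::real_normed_vector \<Rightarrow> ('a \<Rightarrow>\<^sub>L real) \<Rightarrow> real" where
  "pairing x xs = blinfun_apply xs x"

definition monotone_op :: "('a::real_normed_vector \<times> ('a \<Rightarrow>\<^sub>L real)) set \<Rightarrow> bool" where
  "monotone_op T \<longleftrightarrow>
     (\<forall>x xs y ys. (x, xs) \<in> T \<longrightarrow> (y, ys) \<in> T \<longrightarrow> pairing (x - y) (xs - ys) \<ge> 0)"

definition maximal_monotone :: "('a::real_normed_vector \<times> ('a \<Rightarrow>\<^sub>L real)) set \<Rightarrow> bool" where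
  "maximal_monotone T \<longleftrightarrow> monotone_op T \<and> (\<forall>S. monotone_op S \<longrightarrow> T \<subseteq> S \<longrightarrow> S = T)"

definition self_cancelling :: "('a::real_normed_vector \<times> ('a \<Rightarrow>\<^sub>L real)) set \<Rightarrow> bool" where
  "self_cancelling A \<longleftrightarrow> subspace A \<and> (\<forall>x xs. (x, xs) \<in> A \<longrightarrow> pairing x xs = 0)"

definition perp :: "('a::real_normed_vector \<times> ('a \<Rightarrow>\<^sub>L real)) set
    \<Rightarrow> ('a \<times> ('a \<Rightarrow>\<^sub>L real)) set" where
  "perp B = {(y, ys). \<forall>x xs. (x, xs) \<in> B \<longrightarrow> pairing x ys + pairing y xs = 0}"

definition enlargement :: "('a::real_normed_vector \<times> ('a \<Rightarrow>\<^sub>L real)) set \<Rightarrow> real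
    \<Rightarrow> ('a \<times> ('a \<Rightarrow>\<^sub>L real)) set" where
  "enlargement T \<epsilon> = {(x, xs). \<forall>y ys. (y, ys) \<in> T \<longrightarrow> pairing (x - y) (xs - ys) \<ge> - \<epsilon>}"

definition non_enlargeable :: "('a::real_normed_vector \<times> ('a \<Rightarrow>\<^sub>L real)) set \<Rightarrow> bool" where
  "non_enlargeable T \<longleftrightarrow> maximal_monotone T \<and> (\<forall>\<epsilon>\<ge>0. enlargement T \<epsilon> = T)"

definition fitzpatrick :: "('a::real_normed_vector \<times> ('a \<Rightarrow>\<^sub>L real)) set
    \<Rightarrow> 'a \<Rightarrow> ('a \<Rightarrow>\<^sub>L real) \<Rightarrow> ereal" where
  "fitzpatrick T x xs =
     (SUP p\<in>T. ereal (pairing x (snd p) + pairing (fst p) xs - pairing (fst p) (snd p)))"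

end

theory Submission
  imports Defs
begin

lemma pairing_simps[simp]:
 "pairing (x+y) f = pairing x f + pairing y f" "pairing x (f+g) = pairing x f + pairing x g"
 "pairing (x-y) f = pairing x f - pairing y f" "pairing x (f-g) = pairing x f - pairing x g"
 "pairing (c*\<^sub>Rx) f = c* pairing x f" "pairing x (c*\<^sub>R f) = c * pairing x f"
  by (simp_all add: pairing_def blinfun.bilinear_simps)

lemma transl_mem:
  fixes x0 :: "'a::ab_group_add" and x0s :: "'b::ab_group_add"
  shows
  "((x,xs) \<in> (\<lambda>(y, ys). (y + x0, ys + x0s)) ` B) \<longleftrightarrow> (x-x0, xs-x0s) \<in> B"
proof
  assume "(x,xs) \<in> (\<lambda>(y, ys). (y + x0, ys + x0s)) ` B"
  then obtain y ys where "(y,ys) \<in> B" "x = y+x0" "xs = ys+x0s" by auto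
  then show "(x-x0, xs-x0s) \<in> B" by simp
next
  assume h: "(x-x0, xs-x0s) \<in> B"
  show "(x,xs) \<in> (\<lambda>(y, ys). (y + x0, ys + x0s)) ` B"
    by (rule image_eqI[OF _ h]) simp
qed

lemma lin_zero:
  fixes L K :: real
  assumes "\<And>t. t * L \<le> K"
  shows "L = 0"
proof (rule ccontr)
  assume "L \<noteq> 0"
  have "((K+1)/L) * L \<le> K" by (rule assms)
  with \<open>L \<noteq> 0\<close> show False by simp
qed

theorem lemma3:
  fixes A :: "('a::banach \<times> ('a \<Rightarrow>\<^sub>L real)) set"
    and x0 :: 'a and x0s :: "'a \<Rightarrow>\<^sub>L real"
  assumes "self_cancelling A"
    and "maximal_monotone (perp A)"
  defines "T \<equiv> (\<lambda>(y, ys). (y + x0, ys + x0s)) ` perp A"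
  shows "non_enlargeable T \<and> {(x, xs). fitzpatrick T x xs < \<infinity>} = T"
proof -
  let ?B = "perp A"
  have subA: "subspace A" and scA: "\<And>x xs. (x,xs) \<in> A \<Longrightarrow> pairing x xs = 0"
    using assms(1) unfolding self_cancelling_def by auto
  have monB: "monotone_op ?B" and maxB: "\<And>S. monotone_op S \<Longrightarrow> ?B \<subseteq> S \<Longrightarrow> S = ?B"
    using assms(2) unfolding maximal_monotone_def by auto
  have memT: "\<And>x xs. (x,xs) \<in> T \<longleftrightarrow> (x-x0, xs-x0s) \<in> ?B"
    unfolding T_def by (rule transl_mem)
  have AB: "A \<subseteq> ?B"
  proof
    fix p assume p: "p \<in> A"
    obtain a as where pa: "p = (a,as)" by fastforce
    show "p \<in> ?B" unfolding perp_def pa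
    proof (clarsimp)
      fix b bs assume b: "(b,bs) \<in> A"
      have "(b,bs) + (a,as) \<in> A" using subspace_add[OF subA b, of p] p pa by simp
      then have "pairing (b+a) (bs+as) = 0" by (intro scA) simp
      moreover have "pairing a as = 0" "pairing b bs = 0" using scA p pa b by auto
      ultimately show "pairing b as + pairing a bs = 0" by simp
    qed
  qed
  have monT: "monotone_op T"
    unfolding monotone_op_def
  proof (intro allI impI)
    fix x xs y ys assume "(x,xs) \<in> T" "(y,ys) \<in> T"
    then have "(x-x0, xs-x0s) \<in> ?B" "(y-x0, ys-x0s) \<in> ?B" using memT by auto
    then have "pairing ((x-x0) - (y-x0)) ((xs-x0s) - (ys-x0s)) \<ge> 0"
      using monB unfolding monotone_op_def by blast
    then show "pairing (x - y) (xs - ys) \<ge> 0" by simp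
  qed
  have maxT: "maximal_monotone T"
    unfolding maximal_monotone_def
  proof (intro conjI allI impI monT)
    fix S assume monS: "monotone_op S" and TS: "T \<subseteq> S"
    define S' where "S' = (\<lambda>(y, ys). (y - x0, ys - x0s)) ` S"
    have memS': "\<And>x xs. (x,xs) \<in> S' \<longleftrightarrow> (x+x0, xs+x0s) \<in> S"
      using transl_mem[of _ _ "-x0" "-x0s" S] unfolding S'_def by simp
    have "monotone_op S'"
      unfolding monotone_op_def
    proof (intro allI impI)
      fix x xs y ys assume "(x,xs) \<in> S'" "(y,ys) \<in> S'"
      then have "(x+x0, xs+x0s) \<in> S" "(y+x0, ys+x0s) \<in> S" using memS' by auto
      then have "pairing ((x+x0) - (y+x0)) ((xs+x0s) - (ys+x0s)) \<ge> 0"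
        using monS unfolding monotone_op_def by blast
      then show "pairing (x - y) (xs - ys) \<ge> 0" by simp
    qed
    moreover have "?B \<subseteq> S'"
    proof
      fix p assume "p \<in> ?B"
      then obtain b bs where p: "p = (b,bs)" "(b,bs) \<in> ?B" by (cases p) auto
      then have "(b+x0, bs+x0s) \<in> T" using memT by simp
      then show "p \<in> S'" using TS memS' p by auto
    qed
    ultimately have S'B: "S' = ?B" using maxB by blast
    show "S = T"
    proof
      show "S \<subseteq> T"
      proof
        fix p assume "p \<in> S"
        then obtain x xs where p: "p = (x,xs)" "(x,xs) \<in> S" by (cases p) auto
        then have "(x-x0, xs-x0s) \<in> S'" using memS' by simp
        then show "p \<in> T" using S'B memT p by simp
      qed
    qed (rule TS)
  qed
  have key: "(x,xs) \<in> T" if fin: "fitzpatrick T x xs < \<infinity>" for x xs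
  proof -
    let ?f = "\<lambda>p. ereal (pairing x (snd p) + pairing (fst p) xs - pairing (fst p) (snd p))"
    obtain M where M: "fitzpatrick T x xs \<le> ereal M"
      using fin by (cases "fitzpatrick T x xs") auto
    have bnd: "pairing x ys + pairing y xs - pairing y ys \<le> M" if "(y,ys) \<in> T" for y ys
    proof -
      have "?f (y,ys) \<le> fitzpatrick T x xs"
        unfolding fitzpatrick_def by (rule SUP_upper[OF that])
      with M have "?f (y,ys) \<le> ereal M" by (rule order_trans[rotated])
      then show ?thesis by simp
    qed
    have "\<forall>a as. (a,as) \<in> A \<longrightarrow> pairing a (xs - x0s) + pairing (x - x0) as = 0"
    proof (intro allI impI)
      fix a as assume a: "(a,as) \<in> A"
      have aa: "pairing a as = 0" using scA a by simp
      let ?L = "pairing x as + pairing a xs - pairing a x0s - pairing x0 as"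
      let ?K = "M - (pairing x x0s + pairing x0 xs - pairing x0 x0s)"
      have "?L = 0"
      proof (rule lin_zero[where K = ?K])
        fix t :: real
        have "t *\<^sub>R (a,as) \<in> A" by (rule subspace_scale[OF subA a])
        then have "(t *\<^sub>R a, t *\<^sub>R as) \<in> ?B" using AB by auto
        then have "(t *\<^sub>R a + x0, t *\<^sub>R as + x0s) \<in> T" using memT by simp
        from bnd[OF this] aa show "t * ?L \<le> ?K"
          by (simp add: algebra_simps)
      qed
      then show "pairing a (xs - x0s) + pairing (x - x0) as = 0" by simp
    qed
    then have "(x-x0, xs-x0s) \<in> ?B" unfolding perp_def by simp
    then show ?thesis using memT by simp
  qed
  have fitz_le: "fitzpatrick T x xs \<le> ereal (pairing x xs + e)"
    if "(x,xs) \<in> enlargement T e" for x xs e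
    unfolding fitzpatrick_def
  proof (rule SUP_least)
    fix p assume p: "p \<in> T"
    obtain y ys where py: "p = (y,ys)" by fastforce
    have "pairing (x - y) (xs - ys) \<ge> - e"
      using that p py unfolding enlargement_def by auto
    then show "ereal (pairing x (snd p) + pairing (fst p) xs - pairing (fst p) (snd p))
               \<le> ereal (pairing x xs + e)" using py by simp
  qed
  have TE: "T \<subseteq> enlargement T e" if "e \<ge> 0" for e
  proof
    fix p assume p: "p \<in> T"
    obtain x xs where px: "p = (x,xs)" by fastforce
    have "\<forall>y ys. (y,ys) \<in> T \<longrightarrow> pairing (x - y) (xs - ys) \<ge> - e"
    proof (intro allI impI)
      fix y ys assume "(y,ys) \<in> T"
      then have "pairing (x-y) (xs-ys) \<ge> 0" using monT p px unfolding monotone_op_def by blast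
      with that show "pairing (x - y) (xs - ys) \<ge> - e" by simp
    qed
    then show "p \<in> enlargement T e" unfolding enlargement_def px by simp
  qed
  have ET: "enlargement T e \<subseteq> T" for e
  proof
    fix p assume p: "p \<in> enlargement T e"
    obtain x xs where px: "p = (x,xs)" by fastforce
    have "fitzpatrick T x xs < \<infinity>" using fitz_le[of x xs e] p px by auto
    then show "p \<in> T" using key px by simp
  qed
  have "{(x, xs). fitzpatrick T x xs < \<infinity>} = T"
  proof
    show "{(x, xs). fitzpatrick T x xs < \<infinity>} \<subseteq> T" using key by auto
    show "T \<subseteq> {(x, xs). fitzpatrick T x xs < \<infinity>}"
    proof
      fix p assume "p \<in> T"
      then have "p \<in> enlargement T 0" using TE by blast
      then show "p \<in> {(x, xs). fitzpatrick T x xs < \<infinity>}"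
        using fitz_le[of "fst p" "snd p" 0] by (cases p) auto
    qed
  qed
  moreover have "non_enlargeable T"
    unfolding non_enlargeable_def using maxT TE ET by blast
  ultimately show ?thesis by blast
qed

end
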